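(* Let $t(0)t(1)t(2)\cdots$ be the Thue–Morse sequence, and define $f:\mathbb{N}\times\mathbb{N}\to\{0,1\}$ by $f(i,j)=t(i+j)$. Then $f$ is frameless: there do not exist $m,n\ge0$ and $p,q\ge1$ such that $f(m,n+i)=f(m+p,n+i)$ for all $0\le i\le q$ and $f(m+j,n)=f(m+j,n+q)$ for all $0\le j\le p$.
   Context: $\mathbb{N}=\{0,1,2,\dots\}$. The Thue–Morse sequence is defined by $t(n)=$ the number of $1$ bits in the binary representation of $n$, taken modulo $2$ (so it begins $0110100110010110\cdots$). A picture frame in a coloring $f$ of $\mathbb{N}\times\mathbb{N}$ is a rectangular block $\{m,\dots,m+p\}\times\{n,\dots,n+q\}$ with $p,q\ge1$ whose first and last rows agree and whose first and last columns agree; $f$ is frameless if it has no picture frame. *)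

theory Defs
  imports Main
begin

fun ones :: "nat \<Rightarrow> nat" where
  "ones n = (if n = 0 then 0 else n mod 2 + ones (n div 2))"

declare ones.simps[simp del]

definition thue_morse :: "nat \<Rightarrow> nat" where
  "thue_morse n = ones n mod 2"

definition has_picture_frame :: "(nat \<Rightarrow> nat \<Rightarrow> 'a) \<Rightarrow> bool" where
  "has_picture_frame f \<longleftrightarrow>
     (\<exists>m n p q. p \<ge> 1 \<and> q \<ge> 1 \<and>
        (\<forall>i\<le>q. f m (n + i) = f (m + p) (n + i)) \<and>
        (\<forall>j\<le>p. f (m + j) n = f (m + j) (n + q)))"

definition frameless :: "(nat \<Rightarrow> nat \<Rightarrow> 'a) \<Rightarrow> bool" where
  "frameless f \<longleftrightarrow> \<not> has_picture_frame f"

end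

theory Submission
  imports Defs
begin

lemma ones_even: "ones (2*n) = ones n"
  by (cases "n = 0") (simp_all add: ones.simps[of "2*n"])

lemma ones_odd: "ones (2*n+1) = Suc (ones n)"
proof -
  have "ones (2*n+1) = (2*n+1) mod 2 + ones ((2*n+1) div 2)" by (subst ones.simps) simp
  then show ?thesis by simp
qed

lemma tm_even: "thue_morse (2*n) = thue_morse n"
  by (simp add: thue_morse_def ones_even)

lemma tm_odd: "thue_morse (2*n+1) = 1 - thue_morse n"
  unfolding thue_morse_def ones_odd by presburger

lemma tm_le1: "thue_morse n \<le> 1"
  unfolding thue_morse_def by simp

lemma tm_pair: "thue_morse (2*k) \<noteq> thue_morse (2*k+1)"
proof -
  have "thue_morse (2*k+1) = 1 - thue_morse k" by (rule tm_odd)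
  then show ?thesis using tm_le1[of k] tm_even[of k] by arith
qed

lemma tm_pair': "even x \<Longrightarrow> thue_morse x \<noteq> thue_morse (x+1)"
  using tm_pair by (metis evenE)

lemma no_three: "\<not> (thue_morse x = thue_morse (x+1) \<and> thue_morse (x+1) = thue_morse (x+2))"
proof (cases "even x")
  case True then show ?thesis using tm_pair'[of x] by auto
next
  case False then have "even (x+1)" by simp
  then show ?thesis using tm_pair'[of "x+1"] by (auto simp: add.assoc)
qed

lemma overlap_free:
  "p \<ge> 1 \<Longrightarrow> \<not> (\<forall>i\<le>p. thue_morse (a+i) = thue_morse (a+p+i))"
proof (induction p arbitrary: a rule: less_induct)
  case (less p)
  show ?case
  proof
    assume H: "\<forall>i\<le>p. thue_morse (a+i) = thue_morse (a+p+i)"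
    show False
    proof (cases "p = 1")
      case True
      then show False using H[rule_format, of 0] H[rule_format, of 1] no_three[of a]
        by (auto simp: add.assoc)
    next
      case p1: False
      show False
      proof (cases "even p")
        case True
        then obtain r where r: "p = 2*r" by blast
        have r1: "r \<ge> 1" "r < p" using r less.prems p1 by auto
        have "\<forall>i\<le>r. thue_morse (a div 2+i) = thue_morse (a div 2+r+i)"
        proof (intro allI impI)
          fix i assume i: "i \<le> r"
          have e: "thue_morse (a+2*i) = thue_morse (a+p+2*i)" using H i r by auto
          show "thue_morse (a div 2+i) = thue_morse (a div 2+r+i)"
          proof (cases "even a")
            case True
            then obtain b where b: "a = 2*b" by blast
            have "a + 2*i = 2*(b+i)" "a+p+2*i = 2*(b+r+i)" using b r by auto
            then show ?thesis using e b tm_even[of "b+i"] tm_even[of "b+r+i"] by simp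
          next
            case False
            then obtain b where b: "a = 2*b+1" using oddE by blast
            have "a + 2*i = 2*(b+i)+1" "a+p+2*i = 2*(b+r+i)+1" using b r by auto
            then have "1 - thue_morse (b+i) = 1 - thue_morse (b+r+i)" using e tm_odd[of "b+i"] tm_odd[of "b+r+i"] by simp
            then have "thue_morse (b+i) = thue_morse (b+r+i)" using tm_le1[of "b+i"] tm_le1[of "b+r+i"] by linarith
            then show ?thesis using b by simp
          qed
        qed
        then show False using less.IH[OF r1(2) r1(1)] by blast
      next
        case odd: False
        have p3: "p \<ge> 3" using odd p1 less.prems by presburger
        have alt: "thue_morse x \<noteq> thue_morse (x+1)" if x: "a \<le> x" "x < a+2*p" for x
        proof (cases "x < a + p")
          case True
          show ?thesis
          proof (cases "even x")
            case True then show ?thesis using tm_pair' by blast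
          next
            case False
            then have ev: "even (x+p)" using odd by simp
            have "thue_morse x = thue_morse (x+p)" using H[rule_format, of "x-a"] x True by (auto simp: ac_simps)
            moreover have "thue_morse (x+1) = thue_morse (x+p+1)"
            proof -
              have "a + (x+1-a) = x+1" "a+p+(x+1-a) = x+p+1" "x+1-a \<le> p" using x True by auto
              then show ?thesis using H[rule_format, of "x+1-a"] by metis
            qed
            ultimately show ?thesis using tm_pair'[OF ev] by simp
          qed
        next
          case False
          define y where "y = x - p"
          have y: "x = y + p" "a \<le> y" "y < a + p" using False x unfolding y_def by auto
          show ?thesis
          proof (cases "even y")
            case True
            have "thue_morse y = thue_morse (y+p)"
            proof -
              have "a + (y-a) = y" "a+p+(y-a) = y+p" "y-a \<le> p" using y by auto
              then show ?thesis using H[rule_format, of "y-a"] by metis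
            qed
            moreover have "thue_morse (y+1) = thue_morse (y+p+1)"
            proof -
              have "a + (y+1-a) = y+1" "a+p+(y+1-a) = y+p+1" "y+1-a \<le> p" using y by auto
              then show ?thesis using H[rule_format, of "y+1-a"] by metis
            qed
            ultimately show ?thesis using tm_pair'[OF True] y by simp
          next
            case False
            then have ev: "even x" using odd y by simp
            then show ?thesis using tm_pair' by blast
          qed
        qed
        have two: "thue_morse x = thue_morse (x+2)" if x: "a \<le> x" "x + 2 \<le> a+2*p" for x
          using alt[of x] alt[of "x+1"] x tm_le1[of x] tm_le1[of "x+1"] tm_le1[of "x+2"]
          by (simp add: add.assoc)
        obtain k where k: "a \<le> 2*k" "2*k \<le> a+1"
          by (cases "even a") (auto elim!: evenE oddE intro: that[of "a div 2"] that[of "a div 2 + 1"])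
        have "thue_morse (2*k) = thue_morse (2*k+2)" using two[of "2*k"] k p3 by auto
        moreover have "thue_morse (2*k+2) = thue_morse (2*k+4)" using two[of "2*k+2"] k p3 by (simp add: numeral_eq_Suc)
        moreover have "2*k+2 = 2*(k+1)" "2*k+4 = 2*(k+2)" by auto
        ultimately have "thue_morse k = thue_morse (k+1) \<and> thue_morse (k+1) = thue_morse (k+2)"
          using tm_even[of k] tm_even[of "k+1"] tm_even[of "k+2"] by metis
        then show False using no_three by blast
      qed
    qed
  qed
qed

theorem theorem3:
  shows "frameless (\<lambda>i j. thue_morse (i + j))"
  unfolding frameless_def has_picture_frame_def
proof
  assume "\<exists>m n p q. p \<ge> 1 \<and> q \<ge> 1 \<and>
        (\<forall>i\<le>q. thue_morse (m + (n + i)) = thue_morse (m + p + (n + i))) \<and>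
        (\<forall>j\<le>p. thue_morse (m + j + n) = thue_morse (m + j + (n + q)))"
  then obtain m n p q where pq: "p \<ge> 1" "q \<ge> 1"
    and A: "\<forall>i\<le>q. thue_morse (m + (n + i)) = thue_morse (m + p + (n + i))"
    and B: "\<forall>j\<le>p. thue_morse (m + j + n) = thue_morse (m + j + (n + q))" by blast
  show False
  proof (cases "p \<le> q")
    case True
    have "\<forall>i\<le>p. thue_morse (m+n+i) = thue_morse (m+n+p+i)"
    proof (intro allI impI)
      fix i assume "i \<le> p"
      then show "thue_morse (m+n+i) = thue_morse (m+n+p+i)"
        using A[rule_format, of i] True by (simp add: ac_simps)
    qed
    then show False using overlap_free pq by blast
  next
    case False
    have "\<forall>i\<le>q. thue_morse (m+n+i) = thue_morse (m+n+q+i)"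
    proof (intro allI impI)
      fix i assume "i \<le> q"
      then show "thue_morse (m+n+i) = thue_morse (m+n+q+i)"
        using B[rule_format, of i] False by (simp add: ac_simps)
    qed
    then show False using overlap_free pq by blast
  qed
qed

end
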